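(* Assume the standing assumptions (A1)–(A4), $\rho>0$, and $D_0>0$, $L_0>0$. Let $\epsilon_1,\epsilon_2\ge 0$ satisfy $\bigl[\frac{2\epsilon_1}{\mu_0}\bigr]^{1/2}\le Z_1(\epsilon_2)$. If $p\in\mathbb R^{n_p}$ satisfies $|f(p)-f(p^* )|\le \epsilon_1$, then $|f_0(p)-f_0(p^* )|\le \epsilon_2$.
   Context: Let $n_p,n_c\ge 1$, let $f_0:\mathbb R^{n_p}\to\mathbb R$ and $c_i:\mathbb R^{n_p}\to\mathbb R$ ($i=1,\dots,n_c$) be continuously differentiable, and let $\{1,\dots,n_c\}=I_s\cup I_h$ be a partition into disjoint sets of soft and hard constraint indices. The original problem is $\min_{p\in\mathbb R^{n_p}} f_0(p)$ subject to $c_i(p)\le 0$ for all $i$; $f^{opt}$ denotes its optimal value and $p^{opt}$ an optimal solution (assumed to exist). For a fixed $\varepsilon_\psi>0$ let $\psi(p):=\sum_{i\in I_s}[\max\{0,c_i(p)\}]^2+\sum_{i\in I_h}[\max\{0,c_i(p)+\varepsilon_\psi\}]^2$, and for a penalty parameter $\rho>0$ let $f(p):=f_0(p)+\rho\,\psi(p)$. A differentiable function $\ell$ belongs to $\mathcal F^1_L$ if $\ell(p_2)\le \ell(p_1)+\langle \ell'(p_1),p_2-p_1\rangle+\frac L2\|p_2-p_1\|^2$ for all $p_1,p_2$, and is $\mu$-strongly convex if $\ell(p_2)\ge \ell(p_1)+\langle \ell'(p_1),p_2-p_1\rangle+\frac \mu2\|p_2-p_1\|^2$ for all $p_1,p_2$.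 Standing assumptions: (A1) $f_0(p)\ge 0$ for all $p$; (A2) $f_0\in\mathcal F^1_{L_0}$ and $\psi\in\mathcal F^1_{L_\psi}$ for some reals $L_0,L_\psi\ge 0$; (A3) $f_0$ is $\mu_0$-strongly convex for some $\mu_0>0$, and $\psi$ is convex; (A4) the set $\mathcal A:=\{p:\psi(p)=0\}$ is nonempty and there is $\beta>0$ with $\psi(p)\ge \beta\,[d(p,\mathcal A)]^2$ for all $p$, where $d(p,\mathcal A):=\min_{z\in\mathcal A}\|z-p\|$. Notation: $\|\cdot\|$ is the Euclidean norm; $p^*$ is the unique minimizer of $f$ over $\mathbb R^{n_p}$; $p_u$ is the unique unconstrained minimizer of $f_0$; $p_a$ is a fixed point with $\psi(p_a)=0$; $D_0:=\sup\{\|f_0'(p)\|:\ f_0(p)\le f_0(p_a)\}$; $d(p):=\|p-p^*\|$. For $\epsilon\ge 0$, $Z_1(\epsilon):=\frac{D_0}{L_0}\Bigl[\bigl(1+\frac{2L_0}{D_0^2}\epsilon\bigr)^{1/2}-1\Bigr]$. *)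

theory Defs
  imports "HOL-Analysis.Analysis"
begin

definition C1_with_grad :: "('a::euclidean_space \<Rightarrow> real) \<Rightarrow> ('a \<Rightarrow> 'a) \<Rightarrow> bool" where
  "C1_with_grad f g \<longleftrightarrow> (\<forall>x. GDERIV f x :> g x) \<and> continuous_on UNIV g"

definition cont_diff :: "('a::euclidean_space \<Rightarrow> real) \<Rightarrow> bool" where
  "cont_diff f \<longleftrightarrow> (\<exists>g. C1_with_grad f g)"

definition in_F1L :: "real \<Rightarrow> ('a::euclidean_space \<Rightarrow> real) \<Rightarrow> bool" where
  "in_F1L L f \<longleftrightarrow> (\<exists>g. (\<forall>x. GDERIV f x :> g x) \<and>
     (\<forall>p1 p2. f p2 \<le> f p1 + inner (g p1) (p2 - p1) + L / 2 * (norm (p2 - p1))\<^sup>2))"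

definition strongly_convex_grad :: "real \<Rightarrow> ('a::euclidean_space \<Rightarrow> real) \<Rightarrow> bool" where
  "strongly_convex_grad mu f \<longleftrightarrow> (\<exists>g. (\<forall>x. GDERIV f x :> g x) \<and>
     (\<forall>p1 p2. f p2 \<ge> f p1 + inner (g p1) (p2 - p1) + mu / 2 * (norm (p2 - p1))\<^sup>2))"

definition psi_pen :: "(nat \<Rightarrow> 'a \<Rightarrow> real) \<Rightarrow> nat set \<Rightarrow> nat set \<Rightarrow> real \<Rightarrow> 'a \<Rightarrow> real" where
  "psi_pen c Is Ih eps_psi p =
     (\<Sum>i\<in>Is. (max 0 (c i p))\<^sup>2) + (\<Sum>i\<in>Ih. (max 0 (c i p + eps_psi))\<^sup>2)"

definition Z1 :: "real \<Rightarrow> real \<Rightarrow> real \<Rightarrow> real" where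
  "Z1 D0 L0 eps = D0 / L0 * (sqrt (1 + 2 * L0 / D0\<^sup>2 * eps) - 1)"

end

theory Submission imports Defs begin

lemma gderiv_uniq:
  fixes a b :: "'a::real_inner"
  assumes "GDERIV f x :> a" "GDERIV f x :> b" shows "a = b"
proof -
  have "(\<lambda>h. inner h a) = (\<lambda>h. inner h b)"
    using has_derivative_unique assms unfolding gderiv_def by blast
  then have "inner (a - b) a = inner (a - b) b" by metis
  then have "inner (a - b) (a - b) = 0" by (simp add: inner_diff_right)
  then show ?thesis by simp
qed

lemma sc_combine:
  fixes f0 ps :: "'a::real_inner \<Rightarrow> real" and g :: "'a \<Rightarrow> 'a"
  assumes sc: "\<forall>p1 p2. f0 p2 \<ge> f0 p1 + inner (g p1) (p2 - p1) + mu / 2 * (norm (p2 - p1))\<^sup>2"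
    and cv: "convex_on UNIV ps" and rho: "rho \<ge> 0"
    and mn: "\<forall>x. f0 ps0 + rho * ps ps0 \<le> f0 x + rho * ps x"
    and t: "0 < t" "t < 1"
  shows "t * (mu / 2 * (1 - t) * (norm (p - ps0))\<^sup>2) \<le> t * ((f0 p + rho * ps p) - (f0 ps0 + rho * ps ps0))"
proof -
  define q where "q = (1 - t) *\<^sub>R ps0 + t *\<^sub>R p"
  have e1: "ps0 - q = (- t) *\<^sub>R (p - ps0)" unfolding q_def by (simp add: algebra_simps)
  have e2: "p - q = (1 - t) *\<^sub>R (p - ps0)" unfolding q_def by (simp add: algebra_simps)
  have a1: "f0 ps0 \<ge> f0 q - t * inner (g q) (p - ps0) + mu / 2 * (t^2 * (norm (p - ps0))\<^sup>2)"
    using sc[rule_format, of q ps0] unfolding e1 by (simp add: power_mult_distrib)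
  have a2: "f0 p \<ge> f0 q + (1 - t) * inner (g q) (p - ps0) + mu / 2 * ((1-t)^2 * (norm (p - ps0))\<^sup>2)"
    using sc[rule_format, of q p] t unfolding e2 by (simp add: power_mult_distrib)
  have c: "ps q \<le> (1 - t) * ps ps0 + t * ps p"
    unfolding q_def using convex_onD[OF cv, of t ps0 p] t by simp
  have m: "f0 ps0 + rho * ps ps0 \<le> f0 q + rho * ps q" using mn by blast
  have "(1 - t) * f0 ps0 + t * f0 p \<ge> f0 q + mu / 2 * t * (1 - t) * (norm (p - ps0))\<^sup>2"
  proof -
    have "(1 - t) * f0 ps0 + t * f0 p \<ge> (1-t) * (f0 q - t * inner (g q) (p - ps0) + mu / 2 * (t^2 * (norm (p - ps0))\<^sup>2))
        + t * (f0 q + (1 - t) * inner (g q) (p - ps0) + mu / 2 * ((1-t)^2 * (norm (p - ps0))\<^sup>2))"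
      using a1 a2 t by (intro add_mono mult_left_mono) auto
    moreover have "(1-t) * (f0 q - t * inner (g q) (p - ps0) + mu / 2 * (t^2 * (norm (p - ps0))\<^sup>2))
        + t * (f0 q + (1 - t) * inner (g q) (p - ps0) + mu / 2 * ((1-t)^2 * (norm (p - ps0))\<^sup>2))
        = f0 q + mu / 2 * t * (1 - t) * (norm (p - ps0))\<^sup>2"
      by (simp add: field_simps power2_eq_square)
    ultimately show ?thesis by linarith
  qed
  moreover have "rho * ps q \<le> rho * ((1 - t) * ps ps0 + t * ps p)" using c rho by (rule mult_left_mono)
  ultimately show ?thesis using m by (simp add: algebra_simps)
qed

lemma lim_lemma:
  fixes a E :: real
  assumes "\<forall>t. 0 < t \<and> t < 1 \<longrightarrow> (1 - t) * a \<le> E"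
  shows "a \<le> E"
proof (rule ccontr)
  assume "\<not> a \<le> E"
  then have aE: "a > E" by simp
  have "(1 - 1/2) * a \<le> E" using assms[rule_format, of "1/2"] by simp
  then have a0: "a > 0" using aE by auto
  define t where "t = (a - E) / (2 * a)"
  have t0: "0 < t" using aE a0 by (simp add: t_def)
  have t1: "t < 1" using aE a0 \<open>(1 - 1/2) * a \<le> E\<close> by (simp add: t_def field_simps)
  have "(1 - t) * a = (a + E) / 2" using a0 by (simp add: t_def field_simps)
  then show False using assms t0 t1 aE by force
qed

lemma grad_bound:
  fixes f0 :: "'a::real_inner \<Rightarrow> real" and g :: "'a \<Rightarrow> 'a"
  assumes sm: "\<forall>p1 p2. f0 p2 \<le> f0 p1 + inner (g p1) (p2 - p1) + L / 2 * (norm (p2 - p1))\<^sup>2"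
    and L: "L > 0" and nn: "\<forall>x. f0 x \<ge> 0"
  shows "(norm (g x))\<^sup>2 \<le> 2 * L * f0 x"
proof -
  have "f0 (x - (1/L) *\<^sub>R g x) \<le> f0 x + inner (g x) (- (1/L) *\<^sub>R g x) + L / 2 * (norm (- (1/L) *\<^sub>R g x))\<^sup>2"
    using spec[OF spec[OF sm, of x], of "x - (1/L) *\<^sub>R g x"] by simp
  also have "\<dots> = f0 x - (norm (g x))\<^sup>2 / (2 * L)"
    using L by (simp add: dot_square_norm power_mult_distrib field_simps power2_eq_square)
  finally have "0 \<le> f0 x - (norm (g x))\<^sup>2 / (2 * L)" using nn[rule_format, of "x - (1/L) *\<^sub>R g x"] by linarith
  then show ?thesis using L by (simp add: field_simps)
qed

theorem corollary2:
  fixes f0 :: "real^'n \<Rightarrow> real" and g0 :: "real^'n \<Rightarrow> real^'n"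
    and c :: "nat \<Rightarrow> real^'n \<Rightarrow> real"
    and n_c :: nat and Is Ih :: "nat set"
    and eps_psi rho L0 L_psi mu0 beta :: real
    and pstar pa p :: "real^'n" and eps1 eps2 :: real
  assumes nc: "n_c \<ge> 1"
    and part: "Is \<union> Ih = {1..n_c}" "Is \<inter> Ih = {}"
    and f0_C1: "C1_with_grad f0 g0"
    and c_C1: "\<forall>i\<in>{1..n_c}. cont_diff (c i)"
    and eps_psi: "eps_psi > 0"
    and rho: "rho > 0"
    and A1: "\<forall>x. f0 x \<ge> 0"
    and A2: "L0 \<ge> 0" "L_psi \<ge> 0" "in_F1L L0 f0" "in_F1L L_psi (psi_pen c Is Ih eps_psi)"
    and A3: "mu0 > 0" "strongly_convex_grad mu0 f0" "convex_on UNIV (psi_pen c Is Ih eps_psi)"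
    and A4: "{x. psi_pen c Is Ih eps_psi x = 0} \<noteq> {}" "beta > 0"
            "\<forall>x. psi_pen c Is Ih eps_psi x \<ge>
                   beta * (infdist x {z. psi_pen c Is Ih eps_psi z = 0})\<^sup>2"
    and pstar: "\<forall>x. f0 pstar + rho * psi_pen c Is Ih eps_psi pstar
                    \<le> f0 x + rho * psi_pen c Is Ih eps_psi x"
    and pa: "psi_pen c Is Ih eps_psi pa = 0"
    and D0pos: "Sup {norm (g0 x) | x. f0 x \<le> f0 pa} > 0"
    and L0pos: "L0 > 0"
    and eps: "eps1 \<ge> 0" "eps2 \<ge> 0"
    and Zcond: "sqrt (2 * eps1 / mu0) \<le> Z1 (Sup {norm (g0 x) | x. f0 x \<le> f0 pa}) L0 eps2"
    and close: "\<bar>(f0 p + rho * psi_pen c Is Ih eps_psi p)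
                  - (f0 pstar + rho * psi_pen c Is Ih eps_psi pstar)\<bar> \<le> eps1"
  shows "\<bar>f0 p - f0 pstar\<bar> \<le> eps2"
proof -
  let ?ps = "psi_pen c Is Ih eps_psi"
  define D0 where "D0 = Sup {norm (g0 x) | x. f0 x \<le> f0 pa}"
  define d where "d = norm (p - pstar)"
  define z where "z = Z1 D0 L0 eps2"
  have g0d: "\<forall>x. GDERIV f0 x :> g0 x" using f0_C1 unfolding C1_with_grad_def by blast
  obtain g1 where g1: "\<forall>x. GDERIV f0 x :> g1 x"
    "\<forall>p1 p2. f0 p2 \<ge> f0 p1 + inner (g1 p1) (p2 - p1) + mu0 / 2 * (norm (p2 - p1))\<^sup>2"
    using A3(2) unfolding strongly_convex_grad_def by blast
  obtain g2 where g2: "\<forall>x. GDERIV f0 x :> g2 x"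
    "\<forall>p1 p2. f0 p2 \<le> f0 p1 + inner (g2 p1) (p2 - p1) + L0 / 2 * (norm (p2 - p1))\<^sup>2"
    using A2(3) unfolding in_F1L_def by blast
  have g10: "g1 = g0" using g1(1) g0d gderiv_uniq by blast
  have g20: "g2 = g0" using g2(1) g0d gderiv_uniq by blast
  have psnn: "\<And>x. ?ps x \<ge> 0" unfolding psi_pen_def by (intro add_nonneg_nonneg sum_nonneg) auto
  define E where "E = (f0 p + rho * ?ps p) - (f0 pstar + rho * ?ps pstar)"
  have "\<forall>t. 0 < t \<and> t < 1 \<longrightarrow> (1 - t) * (mu0 / 2 * d\<^sup>2) \<le> E"
  proof (intro allI impI)
    fix t :: real assume t: "0 < t \<and> t < 1"
    have "t * (mu0 / 2 * (1 - t) * d\<^sup>2) \<le> t * E"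
      using sc_combine[OF g1(2) A3(3), of rho pstar t p] rho pstar t unfolding d_def E_def by auto
    then have "mu0 / 2 * (1 - t) * d\<^sup>2 \<le> E" using t by simp
    then show "(1 - t) * (mu0 / 2 * d\<^sup>2) \<le> E" by (simp add: algebra_simps)
  qed
  then have "mu0 / 2 * d\<^sup>2 \<le> E" by (rule lim_lemma)
  then have "mu0 / 2 * d\<^sup>2 \<le> eps1" using close unfolding E_def by linarith
  then have "d\<^sup>2 \<le> 2 * eps1 / mu0" using A3(1) by (simp add: field_simps)
  then have "d \<le> sqrt (2 * eps1 / mu0)" by (rule real_le_rsqrt)
  then have dz: "d \<le> z" using Zcond unfolding z_def D0_def by linarith
  have d0: "d \<ge> 0" unfolding d_def by simp
  have bdd: "bdd_above {norm (g0 x) | x. f0 x \<le> f0 pa}"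
  proof (rule bdd_aboveI)
    fix y assume "y \<in> {norm (g0 x) | x. f0 x \<le> f0 pa}"
    then obtain x where x: "y = norm (g0 x)" "f0 x \<le> f0 pa" by blast
    have "(norm (g0 x))\<^sup>2 \<le> 2 * L0 * f0 x" using grad_bound[OF g2(2) L0pos A1] g20 by simp
    also have "\<dots> \<le> 2 * L0 * f0 pa" using x(2) L0pos by simp
    finally show "y \<le> sqrt (2 * L0 * f0 pa)" using x(1) by (simp add: real_le_rsqrt)
  qed
  have "f0 pstar + rho * ?ps pstar \<le> f0 pa + rho * ?ps pa" using pstar by blast
  moreover have "rho * ?ps pstar \<ge> 0" using psnn[of pstar] rho by simp
  ultimately have "f0 pstar \<le> f0 pa" using pa by simp
  then have gD: "norm (g0 pstar) \<le> D0" unfolding D0_def by (intro cSup_upper bdd) blast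
  have ip: "\<bar>inner (g0 pstar) (p - pstar)\<bar> \<le> D0 * d"
    using Cauchy_Schwarz_ineq2[of "g0 pstar" "p - pstar"] gD d0 unfolding d_def
    by (meson mult_right_mono norm_ge_zero order_trans)
  have "f0 p \<le> f0 pstar + inner (g0 pstar) (p - pstar) + L0 / 2 * d\<^sup>2"
    using spec[OF spec[OF g2(2), of pstar], of p] unfolding g20 d_def .
  then have up: "f0 p - f0 pstar \<le> D0 * d + L0 / 2 * d\<^sup>2" using ip by linarith
  have "f0 p \<ge> f0 pstar + inner (g0 pstar) (p - pstar) + mu0 / 2 * d\<^sup>2"
    using spec[OF spec[OF g1(2), of pstar], of p] unfolding g10 d_def .
  moreover have "mu0 / 2 * d\<^sup>2 \<ge> 0" using A3(1) by simp
  ultimately have low: "f0 pstar - f0 p \<le> D0 * d" using ip by linarith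
  have D0p: "D0 > 0" using D0pos unfolding D0_def .
  define s where "s = sqrt (1 + 2 * L0 / D0\<^sup>2 * eps2)"
  have s2: "s\<^sup>2 = 1 + 2 * L0 / D0\<^sup>2 * eps2" unfolding s_def using L0pos eps(2) by simp
  have zs: "z = D0 / L0 * (s - 1)" unfolding z_def Z1_def s_def ..
  have zeq: "D0 * z + L0 / 2 * z\<^sup>2 = eps2"
  proof -
    have "D0 * z + L0 / 2 * z\<^sup>2 = D0\<^sup>2 / (2 * L0) * (s\<^sup>2 - 1)"
      unfolding zs using L0pos D0p by (simp add: field_simps power2_eq_square)
    also have "\<dots> = eps2" unfolding s2 using L0pos D0p by (simp add: field_simps)
    finally show ?thesis .
  qed
  have mono: "D0 * d + L0 / 2 * d\<^sup>2 \<le> D0 * z + L0 / 2 * z\<^sup>2"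
    using dz d0 D0p L0pos by (intro add_mono mult_left_mono power_mono) auto
  have "L0 / 2 * d\<^sup>2 \<ge> 0" using L0pos by simp
  then show ?thesis using up low mono zeq by linarith
qed

end
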